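(* Let $\epsilon:B\to A$ be a local augmentation and let $\alpha$, $\beta$ be invertible matrices over $B$ of sizes $n\times n$ and $m\times m$ with $\epsilon(\alpha)$ and $\epsilon(\beta)$ identity matrices. Then $D(\alpha\oplus\beta)=D(\alpha)D(\beta)$ in $\epsilon^{-1}(1)/C_0$.
   Context: Rings are associative with $1$. A local augmentation is a ring homomorphism $\epsilon:B\to A$ with a ring homomorphism $j:A\to B$, $\epsilon j=\mathrm{id}_A$, such that every square matrix over $B$ whose image under $\epsilon$ is invertible is itself invertible. $C_0$ is the subgroup of units of $B$ generated by $\{(1+ab)(1+ba)^{-1}\mid a,b\in B,\ \epsilon(a)=0\}$; it is a normal subgroup of $\epsilon^{-1}(1)$ with abelian quotient. $\alpha\oplus\beta$ is the block diagonal matrix. For an invertible $n\times n$ matrix $\gamma$ over $B$ with $\epsilon(\gamma)$ the identity, $D(\gamma)\in\epsilon^{-1}(1)/C_0$ is defined recursively: if $n=1$, $D(\gamma)$ is the class of $\gamma$; if $n\ge2$, write $\gamma=\begin{pmatrix}\gamma_{11}&\gamma_{12}\\ \gamma_{21}&\gamma_{22}\end{pmatrix}$ with $\gamma_{11}$ of size $1\times1$ (invertible since $\epsilon(\gamma_{11})=1$) and set $D(\gamma)=\gamma_{11}D(\gamma_{22}-\gamma_{21}\gamma_{11}^{-1}\gamma_{12})$. *)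

theory Defs
  imports "Jordan_Normal_Form.Matrix"
begin

definition ring_hom_fun :: "('b::ring_1 \<Rightarrow> 'a::ring_1) \<Rightarrow> bool" where
  "ring_hom_fun f \<longleftrightarrow> (\<forall>x y. f (x + y) = f x + f y) \<and> (\<forall>x y. f (x * y) = f x * f y) \<and> f 1 = 1"

definition local_augmentation :: "('b::ring_1 \<Rightarrow> 'a::ring_1) \<Rightarrow> ('a \<Rightarrow> 'b) \<Rightarrow> bool" where
  "local_augmentation eps j \<longleftrightarrow> ring_hom_fun eps \<and> ring_hom_fun j \<and> (\<forall>a. eps (j a) = a) \<and>
     (\<forall>n (M :: 'b mat). M \<in> carrier_mat n n \<longrightarrow> invertible_mat (map_mat eps M) \<longrightarrow> invertible_mat M)"

definition uinv :: "'b::ring_1 \<Rightarrow> 'b" where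
  "uinv x = (SOME y. x * y = 1 \<and> y * x = 1)"

inductive_set C0 :: "('b::ring_1 \<Rightarrow> 'a::ring_1) \<Rightarrow> 'b set" for eps where
  gen: "eps a = 0 \<Longrightarrow> (1 + a * b) * uinv (1 + b * a) \<in> C0 eps"
| one: "1 \<in> C0 eps"
| mult: "x \<in> C0 eps \<Longrightarrow> y \<in> C0 eps \<Longrightarrow> x * y \<in> C0 eps"
| inv: "x \<in> C0 eps \<Longrightarrow> uinv x \<in> C0 eps"

text \<open>Elements of the quotient eps^{-1}(1)/C_0 are cosets x C_0; the group operation is
  the complex product of cosets.\<close>
definition coset_C0 :: "('b::ring_1 \<Rightarrow> 'a::ring_1) \<Rightarrow> 'b \<Rightarrow> 'b set" where
  "coset_C0 eps x = (\<lambda>c. x * c) ` C0 eps"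

definition quot_mult :: "'b::ring_1 set \<Rightarrow> 'b set \<Rightarrow> 'b set" where
  "quot_mult X Y = {x * y | x y. x \<in> X \<and> y \<in> Y}"

function D_rep :: "'b::ring_1 mat \<Rightarrow> 'b" where
  "D_rep g = (if dim_row g \<le> 1 then g $$ (0,0) else
     (case split_block g 1 1 of (g11, g12, g21, g22) \<Rightarrow>
        g11 $$ (0,0) * D_rep (g22 - g21 * mat 1 1 (\<lambda>_. uinv (g11 $$ (0,0))) * g12)))"
  by pat_completeness auto
termination
  by (relation "measure dim_row") (auto simp: split_block_def Let_def)

definition D :: "('b::ring_1 \<Rightarrow> 'a::ring_1) \<Rightarrow> 'b mat \<Rightarrow> 'b set" where
  "D eps g = coset_C0 eps (D_rep g)"

end

theory Submission
  imports Defs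
begin

declare D_rep.simps[simp del]


definition schur :: "'b::ring_1 mat \<Rightarrow> 'b mat" where
  "schur g = mat (dim_row g - 1) (dim_col g - 1)
     (\<lambda>(i,j). g$$(i+1,j+1) - g$$(i+1,0) * uinv (g$$(0,0)) * g$$(0,j+1))"

lemma D_rep_le1: "dim_row g \<le> 1 \<Longrightarrow> D_rep g = g $$ (0,0)"
  by (subst D_rep.simps) (simp del: D_rep.simps)

lemma D_rep_step:
  assumes "g \<in> carrier_mat k k" "k \<ge> 2"
  shows "D_rep g = g $$ (0,0) * D_rep (schur g)"
proof -
  obtain g11 g12 g21 g22 where sb: "split_block g 1 1 = (g11,g12,g21,g22)"
    by (metis prod_cases4)
  have d: "dim_row g = 1 + (k-1)" "dim_col g = 1 + (k-1)" using assms by auto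
  note c = split_block[OF sb d]
  have e: "g11 = mat 1 1 (\<lambda>ij. g $$ ij)" "g12 = mat 1 (k-1) (\<lambda>(i,j). g $$ (i,j+1))"
     "g21 = mat (k-1) 1 (\<lambda>(i,j). g $$ (i+1,j))" "g22 = mat (k-1) (k-1) (\<lambda>(i,j). g $$ (i+1,j+1))"
    using sb assms unfolding split_block_def Let_def by auto
  have S: "g22 - g21 * mat 1 1 (\<lambda>_. uinv (g11 $$ (0,0))) * g12 = schur g"
    apply (rule eq_matI)
    using assms by (auto simp: e schur_def scalar_prod_def)
  show ?thesis
  proof -
    have "D_rep g = (case split_block g 1 1 of (g11, g12, g21, g22) \<Rightarrow>
        g11 $$ (0,0) * D_rep (g22 - g21 * mat 1 1 (\<lambda>_. uinv (g11 $$ (0,0))) * g12))"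
      by (subst D_rep.simps) (use assms in \<open>simp del: D_rep.simps One_nat_def\<close>)
    also have "\<dots> = g11 $$ (0,0) * D_rep (schur g)" unfolding sb prod.case S by (rule refl)
    finally show ?thesis by (simp add: e)
  qed
qed


lemma schur_diag_1:
  assumes "\<alpha> \<in> carrier_mat 1 1" "\<beta> \<in> carrier_mat m m"
  shows "schur (four_block_mat \<alpha> (0\<^sub>m 1 m) (0\<^sub>m m 1) \<beta>) = \<beta>"
  apply (rule eq_matI)
  using assms by (auto simp: schur_def)

lemma schur_diag:
  assumes "\<alpha> \<in> carrier_mat n n" "\<beta> \<in> carrier_mat m m" "n \<ge> 2"
  shows "schur (four_block_mat \<alpha> (0\<^sub>m n m) (0\<^sub>m m n) \<beta>) =
         four_block_mat (schur \<alpha>) (0\<^sub>m (n-1) m) (0\<^sub>m m (n-1)) \<beta>"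
  apply (rule eq_matI)
  using assms by (auto simp: schur_def)

lemma D_rep_diag:
  assumes "\<alpha> \<in> carrier_mat n n" "\<beta> \<in> carrier_mat m m" "n \<ge> 1" "m \<ge> 1"
  shows "D_rep (four_block_mat \<alpha> (0\<^sub>m n m) (0\<^sub>m m n) \<beta>) = D_rep \<alpha> * D_rep \<beta>"
  using assms
proof (induction n arbitrary: \<alpha>)
  case 0
  then show ?case by simp
next
  case (Suc k)
  have F: "four_block_mat \<alpha> (0\<^sub>m (Suc k) m) (0\<^sub>m m (Suc k)) \<beta> \<in> carrier_mat (Suc k + m) (Suc k + m)"
    using Suc.prems by auto
  have st: "D_rep (four_block_mat \<alpha> (0\<^sub>m (Suc k) m) (0\<^sub>m m (Suc k)) \<beta>) =
      \<alpha> $$ (0,0) * D_rep (schur (four_block_mat \<alpha> (0\<^sub>m (Suc k) m) (0\<^sub>m m (Suc k)) \<beta>))"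
    using D_rep_step[OF F] Suc.prems by auto
  show ?case
  proof (cases "k = 0")
    case True
    have "schur (four_block_mat \<alpha> (0\<^sub>m (Suc k) m) (0\<^sub>m m (Suc k)) \<beta>) = \<beta>"
      using schur_diag_1[of \<alpha> \<beta> m] Suc.prems True by simp
    moreover have "D_rep \<alpha> = \<alpha> $$ (0,0)" using D_rep_le1[of \<alpha>] Suc.prems True by simp
    ultimately show ?thesis using st by simp
  next
    case False
    have sd: "schur (four_block_mat \<alpha> (0\<^sub>m (Suc k) m) (0\<^sub>m m (Suc k)) \<beta>) =
      four_block_mat (schur \<alpha>) (0\<^sub>m k m) (0\<^sub>m m k) \<beta>"
      using schur_diag[of \<alpha> "Suc k" \<beta> m] Suc.prems False by simp
    have sc: "schur \<alpha> \<in> carrier_mat k k" using Suc.prems by (simp add: schur_def)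
    have "D_rep \<alpha> = \<alpha> $$ (0,0) * D_rep (schur \<alpha>)"
      using D_rep_step[of \<alpha> "Suc k"] Suc.prems False by simp
    then show ?thesis using st sd Suc.IH[OF sc Suc.prems(2)] Suc.prems False
      by (simp add: mult.assoc)
  qed
qed

lemma uinv_eq:
  assumes "(x::'b::ring_1) * y = 1" "y * x = 1"
  shows "uinv x = y"
proof -
  have "x * uinv x = 1 \<and> uinv x * x = 1"
    unfolding uinv_def by (rule someI[of _ y]) (use assms in simp)
  then have "uinv x = (y * x) * uinv x" using assms by simp
  also have "\<dots> = y" using \<open>x * uinv x = 1 \<and> uinv x * x = 1\<close> by (simp add: mult.assoc)
  finally show ?thesis .
qed

lemma uinv_props:
  assumes "(x::'b::ring_1) * y = 1" "y * x = 1"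
  shows "x * uinv x = 1" "uinv x * x = 1"
  using uinv_eq[OF assms] assms by auto

context
  fixes eps :: "'b::ring_1 \<Rightarrow> 'a::ring_1" and j :: "'a \<Rightarrow> 'b"
  assumes LA: "local_augmentation eps j"
begin

lemma hom_add: "eps (x + y) = eps x + eps y"
  using LA unfolding local_augmentation_def ring_hom_fun_def by blast
lemma hom_mult: "eps (x * y) = eps x * eps y"
  using LA unfolding local_augmentation_def ring_hom_fun_def by blast
lemma hom_one: "eps 1 = 1"
  using LA unfolding local_augmentation_def ring_hom_fun_def by blast
lemma hom_zero: "eps 0 = 0"
  using hom_add[of 0 0] by simp
lemma hom_diff: "eps (x - y) = eps x - eps y"
  using hom_add[of "x - y" y] by (simp add: algebra_simps)

lemma LA4: "M \<in> carrier_mat n n \<Longrightarrow> invertible_mat (map_mat eps M) \<Longrightarrow> invertible_mat M"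
  using LA unfolding local_augmentation_def by blast

lemma unit_eps1:
  assumes "eps x = 1"
  shows "\<exists>y. x * y = 1 \<and> y * x = 1"
proof -
  let ?M = "mat 1 1 (\<lambda>_. x)"
  have "map_mat eps ?M = 1\<^sub>m 1"
    by (rule eq_matI) (auto simp: assms)
  moreover have "invertible_mat (1\<^sub>m 1 :: 'a mat)"
    unfolding invertible_mat_def inverts_mat_def
    by (intro conjI exI[of _ "1\<^sub>m 1"]) simp_all
  ultimately have "invertible_mat (map_mat eps ?M)" by simp
  then have "invertible_mat ?M"
    by (rule LA4[OF mat_carrier])
  then obtain B where B: "?M * B = 1\<^sub>m 1" "B * ?M = 1\<^sub>m (dim_row B)"
    unfolding invertible_mat_def inverts_mat_def by auto
  have dB: "dim_col B = 1" using arg_cong[OF B(1), of dim_col] by simp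
  have dB2: "dim_row B = 1" using arg_cong[OF B(2), of dim_col] by simp
  have "(?M * B) $$ (0,0) = 1" using B(1) by simp
  then have 1: "x * B $$ (0,0) = 1" using dB dB2 by (simp add: scalar_prod_def)
  have "(B * ?M) $$ (0,0) = 1" using B(2) dB2 by simp
  then have 2: "B $$ (0,0) * x = 1" using dB dB2 by (simp add: scalar_prod_def)
  show ?thesis using 1 2 by blast
qed

lemma eps_uinv:
  assumes "eps x = 1"
  shows "eps (uinv x) = 1"
proof -
  obtain y where "x * y = 1" "y * x = 1" using unit_eps1[OF assms] by blast
  then have "x * uinv x = 1" by (rule uinv_props)
  then have "eps x * eps (uinv x) = 1" using hom_mult hom_one by metis
  then show ?thesis using assms by simp
qed

lemma C0_eps: "c \<in> C0 eps \<Longrightarrow> eps c = 1"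
proof (induction rule: C0.induct)
  case (gen a b)
  have "eps (1 + b * a) = 1" using gen by (simp add: hom_add hom_mult hom_one)
  then have "eps (uinv (1 + b * a)) = 1" by (rule eps_uinv)
  then show ?case using gen by (simp add: hom_add hom_mult hom_one)
next
  case one
  then show ?case by (simp add: hom_one)
next
  case (mult x y)
  then show ?case by (simp add: hom_mult)
next
  case (inv x)
  then show ?case by (simp add: eps_uinv)
qed

lemma uinv_facts:
  assumes "eps x = 1"
  shows "x * uinv x = 1" "uinv x * x = 1"
  using unit_eps1[OF assms] uinv_props by blast+

lemma comm_C0:
  assumes "eps x = 1" "eps y = 1"
  shows "x * y * uinv x * uinv y \<in> C0 eps"
proof -
  define a where "a = x - uinv y"
  have ea: "eps a = 0" using assms eps_uinv[OF assms(2)] by (simp add: a_def hom_diff)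
  have ux: "x * uinv x = 1" "uinv x * x = 1" using uinv_facts[OF assms(1)] by auto
  have uy: "y * uinv y = 1" "uinv y * y = 1" using uinv_facts[OF assms(2)] by auto
  have 1: "1 + a * y = x * y" using uy by (simp add: a_def algebra_simps)
  have 2: "1 + y * a = y * x" using uy by (simp add: a_def algebra_simps)
  have "(y * x) * (uinv x * uinv y) = 1"
    by (metis mult.assoc mult_1_left ux(1) uy(1))
  moreover have "(uinv x * uinv y) * (y * x) = 1"
    by (metis mult.assoc mult_1_left ux(2) uy(2))
  ultimately have 3: "uinv (y * x) = uinv x * uinv y" by (rule uinv_eq)
  have "(1 + a * y) * uinv (1 + y * a) \<in> C0 eps" by (rule C0.gen[of eps a y, OF ea])
  then show ?thesis unfolding 1 2 3 by (simp add: mult.assoc)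
qed

lemma conj_C0:
  assumes "eps y = 1" "c \<in> C0 eps"
  shows "uinv y * c * y \<in> C0 eps"
proof -
  have ec: "eps c = 1" using C0_eps assms(2) by blast
  have ey: "eps (uinv y) = 1" using eps_uinv assms(1) by blast
  have uy: "y * uinv y = 1" "uinv y * y = 1" using uinv_facts[OF assms(1)] by auto
  have uu: "uinv (uinv y) = y" using uinv_eq[OF uy(2) uy(1)] .
  have uc: "uinv c * c = 1" using uinv_facts[OF ec] by auto
  have "uinv y * c * uinv (uinv y) * uinv c * c \<in> C0 eps"
    using C0.mult[OF comm_C0[OF ey ec] assms(2)] .
  then show ?thesis unfolding uu by (simp add: mult.assoc uc)
qed

lemma coset_mult:
  assumes "eps y = 1"
  shows "coset_C0 eps (x * y) = quot_mult (coset_C0 eps x) (coset_C0 eps y)"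
proof
  show "coset_C0 eps (x * y) \<subseteq> quot_mult (coset_C0 eps x) (coset_C0 eps y)"
  proof
    fix z assume "z \<in> coset_C0 eps (x * y)"
    then obtain c where c: "c \<in> C0 eps" "z = x * y * c" unfolding coset_C0_def by auto
    have "x * 1 \<in> coset_C0 eps x" unfolding coset_C0_def using C0.one by blast
    moreover have "y * c \<in> coset_C0 eps y" unfolding coset_C0_def using c by blast
    ultimately show "z \<in> quot_mult (coset_C0 eps x) (coset_C0 eps y)"
      unfolding quot_mult_def using c by (force simp: mult.assoc)
  qed
next
  show "quot_mult (coset_C0 eps x) (coset_C0 eps y) \<subseteq> coset_C0 eps (x * y)"
  proof
    fix z assume "z \<in> quot_mult (coset_C0 eps x) (coset_C0 eps y)"
    then obtain c c' where c: "c \<in> C0 eps" "c' \<in> C0 eps" "z = (x * c) * (y * c')"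
      unfolding quot_mult_def coset_C0_def by auto
    have uy: "y * uinv y = 1" using uinv_facts[OF assms] by auto
    have "(uinv y * c * y) * c' \<in> C0 eps" using C0.mult[OF conj_C0[OF assms c(1)] c(2)] .
    moreover have "z = x * y * ((uinv y * c * y) * c')"
    proof -
      have "x * y * ((uinv y * c * y) * c') = x * (y * uinv y) * c * y * c'"
        by (simp add: mult.assoc)
      then show ?thesis using uy c(3) by (simp add: mult.assoc)
    qed
    ultimately show "z \<in> coset_C0 eps (x * y)" unfolding coset_C0_def by blast
  qed
qed

lemma eps_D_rep:
  assumes "g \<in> carrier_mat k k" "k \<ge> 1" "map_mat eps g = 1\<^sub>m k"
  shows "eps (D_rep g) = 1"
  using assms
proof (induction k arbitrary: g)
  case 0
  then show ?case by simp
next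
  case (Suc k)
  have ent: "eps (g $$ (i,j)) = (if i = j then 1 else 0)" if "i < Suc k" "j < Suc k" for i j
  proof -
    have "map_mat eps g $$ (i,j) = eps (g $$ (i,j))" using that Suc.prems(1) by simp
    moreover have "map_mat eps g $$ (i,j) = 1\<^sub>m (Suc k) $$ (i,j)" using Suc.prems(3) by simp
    ultimately show ?thesis using that by simp
  qed
  show ?case
  proof (cases "k = 0")
    case True
    then show ?thesis using D_rep_le1[of g] Suc.prems ent[of 0 0] by simp
  next
    case False
    have st: "D_rep g = g $$ (0,0) * D_rep (schur g)"
      using D_rep_step[of g "Suc k"] Suc.prems False by simp
    have sc: "schur g \<in> carrier_mat k k" using Suc.prems by (simp add: schur_def)
    have "map_mat eps (schur g) = 1\<^sub>m k"
    proof (rule eq_matI)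
      fix i j assume ij: "i < dim_row (1\<^sub>m k :: 'a mat)" "j < dim_col (1\<^sub>m k :: 'a mat)"
      then have "i < k" "j < k" by auto
      then show "map_mat eps (schur g) $$ (i, j) = 1\<^sub>m k $$ (i, j)"
        using Suc.prems ent[of "i+1" "j+1"] ent[of "i+1" 0]
        by (simp add: schur_def hom_diff hom_mult hom_zero)
    qed (use sc in auto)
    then have "eps (D_rep (schur g)) = 1" using Suc.IH[OF sc] False by simp
    then show ?thesis using st ent[of 0 0] by (simp add: hom_mult)
  qed
qed

end

theorem lemma4p4:
  fixes eps :: "'b::ring_1 \<Rightarrow> 'a::ring_1" and j :: "'a \<Rightarrow> 'b"
    and \<alpha> \<beta> :: "'b mat" and n m :: nat
  assumes "local_augmentation eps j"
    and "\<alpha> \<in> carrier_mat n n" and "\<beta> \<in> carrier_mat m m"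
    and "n \<ge> 1" and "m \<ge> 1"
    and "invertible_mat \<alpha>" and "invertible_mat \<beta>"
    and "map_mat eps \<alpha> = 1\<^sub>m n" and "map_mat eps \<beta> = 1\<^sub>m m"
  shows "D eps (four_block_mat \<alpha> (0\<^sub>m n m) (0\<^sub>m m n) \<beta>) = quot_mult (D eps \<alpha>) (D eps \<beta>)"
proof -
  have "eps (D_rep \<beta>) = 1" using eps_D_rep[OF assms(1,3,5,9)] .
  then show ?thesis unfolding D_def D_rep_diag[OF assms(2-5)] using coset_mult[OF assms(1)] by blast
qed

end
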